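(* Let $n\ge 1$, $r_0>0$, $\kappa\in(0,1)$, $\mathscr C:=C([-r_0,0];\mathbb R^n)$ with $\|f\|_\infty:=\sup_{-r_0\le\theta\le0}|f(\theta)|$, and $L\phi:=\kappa\int_{-r_0}^0\phi(\theta)\,\mathrm d\theta$ for $\phi\in\mathscr C$. Let $Z:\mathbb R^n\to\mathbb R^n$, $b:\mathscr C\to\mathbb R^n$ be measurable, $\sigma\in\mathbb R^n\otimes\mathbb R^n$ invertible, $W$ an $n$-dimensional Brownian motion. Assume there are $L_1,L_2>0$ with $|Z(x)-Z(y)|\le L_1|x-y|$, $|b(\xi)-b(\eta)|\le L_2\|\xi-\eta\|_\infty$, and constants $\lambda_1>\lambda_2>0$ with $$2\langle Z(\xi(0))-Z(\eta(0))+b(\xi)-b(\eta),\ \xi(0)-\eta(0)+L(\xi-\eta)\rangle\le \lambda_2\|\xi-\eta\|_\infty^2-\lambda_1|\xi(0)-\eta(0)|^2$$ for all $x,y\in\mathbb R^n$, $\xi,\eta\in\mathscr C$. With $\rho:=\lambda_1/(1+\kappa)$ assume $1-\kappa r_0^2e^{\rho r_0}>0$ and $$\lambda:=\rho-\frac{(\kappa r_0^2\lambda_1+\lambda_2)e^{\rho r_0}}{(1-\kappa)(1-\kappa r_0^2e^{\rho r_0})}>0.$$ For $\xi\in\mathscr C$ let $X_t(\xi)$ be the segment process ($X_t(\xi)(\theta)=X(t+\theta;\xi)$) of the solution of $\mathrm d\{X(t)+LX_t\}=\{Z(X(t))+b(X_t)\}\mathrm dt+\sigma\,\mathrm dW(t)$,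 $X_0=\xi$, all driven by the same Brownian motion $W$. Then there exists $c>0$ such that for all $\xi,\eta\in\mathscr C$ and $t\ge0$, $$\|X_t(\xi)-X_t(\eta)\|_\infty^2\le c\,e^{-\lambda t}\|\xi-\eta\|_\infty^2.$$ *)

theory Defs
  imports "HOL-Analysis.Analysis"
begin

definition supnorm :: "real \<Rightarrow> (real \<Rightarrow> real^'n) \<Rightarrow> real" where
  "supnorm r0 f = (SUP \<theta>\<in>{-r0..0}. norm (f \<theta>))"

definition seg :: "(real \<Rightarrow> real^'n) \<Rightarrow> real \<Rightarrow> (real \<Rightarrow> real^'n)" where
  "seg X t = (\<lambda>\<theta>. X (t + \<theta>))"

definition Lop :: "real \<Rightarrow> real \<Rightarrow> (real \<Rightarrow> real^'n) \<Rightarrow> real^'n" where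
  "Lop r0 \<kappa> \<phi> = \<kappa> *\<^sub>R integral {-r0..0} \<phi>"

text \<open>X solves d{X(t) + L X_t} = {Z(X(t)) + b(X_t)} dt + sigma dW(t), X_0 = xi,
  pathwise along the (continuous) driving path w; since the noise is additive,
  the stochastic integral of sigma dW over [0,t] is sigma (w t - w 0).\<close>
definition is_solution ::
  "real \<Rightarrow> real \<Rightarrow> (real^'n \<Rightarrow> real^'n) \<Rightarrow> ((real \<Rightarrow> real^'n) \<Rightarrow> real^'n)
   \<Rightarrow> real^'n^'n \<Rightarrow> (real \<Rightarrow> real^'n) \<Rightarrow> (real \<Rightarrow> real^'n) \<Rightarrow> (real \<Rightarrow> real^'n) \<Rightarrow> bool" where
  "is_solution r0 \<kappa> Z b \<sigma> w \<xi> X \<longleftrightarrow>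
     continuous_on {-r0..} X \<and>
     (\<forall>\<theta>\<in>{-r0..0}. X \<theta> = \<xi> \<theta>) \<and>
     (\<forall>t\<ge>0. (\<lambda>s. Z (X s) + b (seg X s)) integrable_on {0..t} \<and>
        X t + Lop r0 \<kappa> (seg X t) =
          \<xi> 0 + Lop r0 \<kappa> \<xi> + integral {0..t} (\<lambda>s. Z (X s) + b (seg X s))
          + \<sigma> *v (w t - w 0))"

end

theory Submission
  imports Defs
begin


lemma supnorm_bdd:
  fixes f :: "real \<Rightarrow> 'a::real_normed_vector"
  assumes "continuous_on {-r0..0} f"
  shows "bdd_above ((\<lambda>\<theta>. norm (f \<theta>)) ` {-r0..0})"
proof -
  have "compact ((\<lambda>\<theta>. norm (f \<theta>)) ` {-r0..0})"
    by (intro compact_continuous_image continuous_intros assms) auto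
  then show ?thesis by (intro bounded_imp_bdd_above compact_imp_bounded)
qed

lemma supnorm_ge:
  assumes "continuous_on {-r0..0} f" "\<theta> \<in> {-r0..0}"
  shows "norm (f \<theta>) \<le> supnorm r0 f"
  unfolding supnorm_def using supnorm_bdd[OF assms(1)] assms(2) by (rule cSUP_upper2) simp

lemma supnorm_nonneg:
  assumes "continuous_on {-r0..0} f" "r0 \<ge> 0"
  shows "0 \<le> supnorm r0 f"
  using supnorm_ge[OF assms(1), of 0] assms(2) by (meson atLeastAtMost_iff neg_le_0_iff_le norm_ge_zero order.trans order_refl)

lemma supnorm_le1:
  assumes "r0 \<ge> 0" "\<And>\<theta>. \<theta> \<in> {-r0..0} \<Longrightarrow> norm (f \<theta>) \<le> Y"
  shows "supnorm r0 f \<le> Y"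
  unfolding supnorm_def using assms by (intro cSUP_least) auto

lemma supnorm_le2:
  assumes "r0 \<ge> 0" "\<And>\<theta>. \<theta> \<in> {-r0..0} \<Longrightarrow> (norm (f \<theta>))\<^sup>2 \<le> Y"
  shows "(supnorm r0 f)\<^sup>2 \<le> Y"
proof -
  have Y: "Y \<ge> 0" using assms(2)[of 0] assms(1) by (smt (verit) atLeastAtMost_iff zero_le_power2)
  have b: "norm (f \<theta>) \<le> sqrt Y" if "\<theta> \<in> {-r0..0}" for \<theta>
    using assms(2)[OF that] by (simp add: real_le_rsqrt)
  have s: "supnorm r0 f \<le> sqrt Y" by (rule supnorm_le1[OF assms(1) b])
  have bdd: "bdd_above ((\<lambda>\<theta>. norm (f \<theta>)) ` {-r0..0})" using b by (intro bdd_aboveI2[of _ _ "sqrt Y"]) auto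
  have "norm (f 0) \<le> supnorm r0 f" unfolding supnorm_def
    using bdd assms(1) by (intro cSUP_upper) auto
  then have "0 \<le> supnorm r0 f" by (meson norm_ge_zero order_trans)
  with s Y show ?thesis by (metis power_mono real_sqrt_pow2)
qed

lemma supnorm_tri:
  assumes "continuous_on {-r0..0} f" "continuous_on {-r0..0} g" "r0 \<ge> 0"
  shows "supnorm r0 f \<le> supnorm r0 g + supnorm r0 (\<lambda>\<theta>. f \<theta> - g \<theta>)"
proof (rule supnorm_le1[OF assms(3)])
  fix \<theta> assume th: "\<theta> \<in> {-r0..0}"
  have c: "continuous_on {-r0..0} (\<lambda>\<theta>. f \<theta> - g \<theta>)" by (intro continuous_intros assms)
  have "norm (f \<theta>) \<le> norm (g \<theta>) + norm (f \<theta> - g \<theta>)" by (metis add.commute diff_add_cancel norm_triangle_ineq)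
  also have "\<dots> \<le> supnorm r0 g + supnorm r0 (\<lambda>\<theta>. f \<theta> - g \<theta>)"
    using supnorm_ge[OF assms(2) th] supnorm_ge[OF c th] by simp
  finally show "norm (f \<theta>) \<le> \<dots>" .
qed

lemma Lop_bound:
  assumes "continuous_on {-r0..0} f" "r0 \<ge> 0" "\<kappa> \<ge> 0"
  shows "norm (Lop r0 \<kappa> f) \<le> \<kappa> * r0 * supnorm r0 f"
proof -
  have "norm (integral {-r0..0} f) \<le> supnorm r0 f * (0 - - r0)"
    using assms by (intro integral_bound supnorm_ge) auto
  then show ?thesis unfolding Lop_def using assms(3)
    by (simp add: mult_left_mono mult.commute mult.left_commute)
qed

lemma Lop_diff:
  assumes "continuous_on {-r0..0} f" "continuous_on {-r0..0} g"
  shows "Lop r0 \<kappa> f - Lop r0 \<kappa> g = Lop r0 \<kappa> (\<lambda>\<theta>. f \<theta> - g \<theta>)"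
  unfolding Lop_def using assms
  by (simp add: integral_diff integrable_continuous_real scaleR_diff_right)

lemma seg_cont:
  fixes X :: "real \<Rightarrow> 'a::real_normed_vector"
  assumes "continuous_on {-r0..} X" "s \<ge> 0"
  shows "continuous_on {-r0..0} (\<lambda>\<theta>. X (s + \<theta>))"
proof (rule continuous_on_compose2[OF assms(1)])
  show "continuous_on {-r0..0} (\<lambda>\<theta>. s + \<theta>)" by (intro continuous_intros)
qed (use assms(2) in auto)

lemma seg_unif:
  assumes "continuous_on {-r0..} X" "r0 \<ge> 0" "s \<ge> 0" "e > 0"
  shows "\<exists>d>0. \<forall>s'\<ge>0. \<bar>s' - s\<bar> < d \<longrightarrow> supnorm r0 (\<lambda>\<theta>. X (s' + \<theta>) - X (s + \<theta>)) \<le> e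
     \<and> supnorm r0 (\<lambda>\<theta>. X (s + \<theta>) - X (s' + \<theta>)) \<le> e"
proof -
  have "uniformly_continuous_on {-r0..s+1} X"
    by (rule compact_uniformly_continuous[OF continuous_on_subset[OF assms(1)]]) auto
  then obtain d0 where d0: "d0 > 0" "\<And>x x'. x \<in> {-r0..s+1} \<Longrightarrow> x' \<in> {-r0..s+1} \<Longrightarrow> dist x' x < d0 \<Longrightarrow> dist (X x') (X x) < e"
    unfolding uniformly_continuous_on_def using assms(4) by metis
  show ?thesis
  proof (intro exI[of _ "min d0 1"] conjI allI impI)
    fix s' :: real assume s': "s' \<ge> 0" "\<bar>s' - s\<bar> < min d0 1"
    have dd: "dist (X (s' + \<theta>)) (X (s + \<theta>)) < e" if th: "\<theta> \<in> {-r0..0}" for \<theta>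
        using th s' assms(3) by (intro d0(2)) (auto simp: dist_real_def)
    show "supnorm r0 (\<lambda>\<theta>. X (s' + \<theta>) - X (s + \<theta>)) \<le> e"
    proof (intro supnorm_le1[OF assms(2)])
      fix \<theta> assume th: "\<theta> \<in> {-r0..0}"
      show "norm (X (s' + \<theta>) - X (s + \<theta>)) \<le> e" using dd[OF th] by (simp add: dist_norm)
    qed
    show "supnorm r0 (\<lambda>\<theta>. X (s + \<theta>) - X (s' + \<theta>)) \<le> e"
    proof (intro supnorm_le1[OF assms(2)])
      fix \<theta> assume th: "\<theta> \<in> {-r0..0}"
      show "norm (X (s + \<theta>) - X (s' + \<theta>)) \<le> e" using dd[OF th] by (simp add: dist_norm norm_minus_commute)
    qed
  qed (use d0 in auto)
qed

lemma cont_S: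
  fixes X :: "real \<Rightarrow> real^'n"
  assumes "continuous_on {-r0..} X" "r0 \<ge> 0"
  shows "continuous_on {0..} (\<lambda>s. supnorm r0 (\<lambda>\<theta>. X (s + \<theta>)))"
  unfolding continuous_on_iff
proof (intro ballI allI impI)
  fix s e :: real assume s: "s \<in> {0..}" and e: "e > 0"
  obtain d where d: "d > 0" "\<And>s'. s' \<ge> 0 \<Longrightarrow> \<bar>s' - s\<bar> < d \<Longrightarrow> supnorm r0 (\<lambda>\<theta>. X (s' + \<theta>) - X (s + \<theta>)) \<le> e/2
     \<and> supnorm r0 (\<lambda>\<theta>. X (s + \<theta>) - X (s' + \<theta>)) \<le> e/2"
    using seg_unif[OF assms, of s "e/2"] s e by auto
  show "\<exists>d>0. \<forall>s'\<in>{0..}. dist s' s < d \<longrightarrow> dist (supnorm r0 (\<lambda>\<theta>. X (s' + \<theta>))) (supnorm r0 (\<lambda>\<theta>. X (s + \<theta>))) < e"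
  proof (intro exI[of _ d] conjI ballI impI)
    fix s' assume s': "s' \<in> {0..}" "dist s' s < d"
    have c1: "continuous_on {-r0..0} (\<lambda>\<theta>. X (s' + \<theta>))" using seg_cont[OF assms(1)] s' by auto
    have c2: "continuous_on {-r0..0} (\<lambda>\<theta>. X (s + \<theta>))" using seg_cont[OF assms(1)] s by auto
    have "supnorm r0 (\<lambda>\<theta>. X (s' + \<theta>)) \<le> supnorm r0 (\<lambda>\<theta>. X (s + \<theta>)) + supnorm r0 (\<lambda>\<theta>. X (s' + \<theta>) - X (s + \<theta>))"
      by (rule supnorm_tri[OF c1 c2 assms(2)])
    moreover have "supnorm r0 (\<lambda>\<theta>. X (s + \<theta>)) \<le> supnorm r0 (\<lambda>\<theta>. X (s' + \<theta>)) + supnorm r0 (\<lambda>\<theta>. X (s + \<theta>) - X (s' + \<theta>))"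
      by (rule supnorm_tri[OF c2 c1 assms(2)])
    moreover have "supnorm r0 (\<lambda>\<theta>. X (s' + \<theta>) - X (s + \<theta>)) \<le> e/2 \<and> supnorm r0 (\<lambda>\<theta>. X (s + \<theta>) - X (s' + \<theta>)) \<le> e/2"
      using d(2)[of s'] s' by (auto simp: dist_real_def)
    ultimately show "dist (supnorm r0 (\<lambda>\<theta>. X (s' + \<theta>))) (supnorm r0 (\<lambda>\<theta>. X (s + \<theta>))) < e"
      using e unfolding dist_real_def by linarith
  qed (use d in auto)
qed

lemma cont_b:
  fixes X :: "real \<Rightarrow> real^'n" and b :: "(real \<Rightarrow> real^'n) \<Rightarrow> real^'n"
  assumes "continuous_on {-r0..} X" "r0 \<ge> 0" "L2 > 0"
    "\<And>\<xi> \<eta>. continuous_on {-r0..0} \<xi> \<Longrightarrow> continuous_on {-r0..0} \<eta> \<Longrightarrow>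
          norm (b \<xi> - b \<eta>) \<le> L2 * supnorm r0 (\<lambda>\<theta>. \<xi> \<theta> - \<eta> \<theta>)"
  shows "continuous_on {0..} (\<lambda>s. b (seg X s))"
  unfolding continuous_on_iff
proof (intro ballI allI impI)
  fix s e :: real assume s: "s \<in> {0..}" and e: "e > 0"
  obtain d where d: "d > 0" "\<And>s'. s' \<ge> 0 \<Longrightarrow> \<bar>s' - s\<bar> < d \<Longrightarrow> supnorm r0 (\<lambda>\<theta>. X (s' + \<theta>) - X (s + \<theta>)) \<le> e/(2*L2)"
    using seg_unif[OF assms(1,2), of s "e/(2*L2)"] s e assms(3) by auto
  show "\<exists>d>0. \<forall>s'\<in>{0..}. dist s' s < d \<longrightarrow> dist (b (seg X s')) (b (seg X s)) < e"
  proof (intro exI[of _ d] conjI ballI impI)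
    fix s' assume s': "s' \<in> {0..}" "dist s' s < d"
    have c1: "continuous_on {-r0..0} (seg X s')" using seg_cont[OF assms(1)] s' by (auto simp: seg_def)
    have c2: "continuous_on {-r0..0} (seg X s)" using seg_cont[OF assms(1)] s by (auto simp: seg_def)
    have "norm (b (seg X s') - b (seg X s)) \<le> L2 * supnorm r0 (\<lambda>\<theta>. X (s' + \<theta>) - X (s + \<theta>))"
      using assms(4)[OF c1 c2] by (simp add: seg_def)
    also have "\<dots> \<le> L2 * (e/(2*L2))"
      using d(2)[of s'] s' assms(3) by (intro mult_left_mono) (auto simp: dist_real_def)
    also have "\<dots> < e" using e assms(3) by simp
    finally show "dist (b (seg X s')) (b (seg X s)) < e" by (simp add: dist_norm)
  qed (use d in auto)
qed

lemma cont_Z: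
  fixes Z :: "'a::real_normed_vector \<Rightarrow> 'b::real_normed_vector"
  assumes "L1 > 0" "\<And>x y. norm (Z x - Z y) \<le> L1 * norm (x - y)"
  shows "continuous_on UNIV Z"
  unfolding continuous_on_iff
proof (intro ballI allI impI)
  fix x and e :: real assume e: "e > 0"
  show "\<exists>d>0. \<forall>x'\<in>UNIV. dist x' x < d \<longrightarrow> dist (Z x') (Z x) < e"
  proof (intro exI[of _ "e/L1"] conjI ballI impI)
    fix x' assume "dist x' x < e / L1"
    then have "L1 * norm (x' - x) < e" using assms(1) by (simp add: dist_norm field_simps)
    then show "dist (Z x') (Z x) < e" using assms(2)[of x' x] by (simp add: dist_norm)
  qed (use e assms in auto)
qed

lemma norm2_deriv:
  fixes M :: "real \<Rightarrow> 'a::real_inner"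
  assumes "(M has_vector_derivative M') (at v within S)"
  shows "((\<lambda>x. (norm (M x))\<^sup>2) has_real_derivative 2 * inner M' (M v)) (at v within S)"
proof -
  have d: "(M has_derivative (\<lambda>h. h *\<^sub>R M')) (at v within S)"
    using assms by (simp add: has_vector_derivative_def)
  have "((\<lambda>x. inner (M x) (M x)) has_derivative (\<lambda>h. inner (M v) (h *\<^sub>R M') + inner (h *\<^sub>R M') (M v))) (at v within S)"
    by (rule has_derivative_inner[OF d d])
  then have "((\<lambda>x. inner (M x) (M x)) has_derivative (*) (2 * inner M' (M v))) (at v within S)"
    by (rule has_derivative_eq_rhs) (simp add: fun_eq_iff inner_commute algebra_simps)
  then show ?thesis unfolding has_field_derivative_def power2_norm_eq_inner .
qed

lemma int_deriv:
  fixes f :: "real \<Rightarrow> 'a::banach"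
  assumes "continuous_on {0..} f" "v > 0"
  shows "((\<lambda>u. integral {0..u} f) has_vector_derivative f v) (at v)"
proof -
  have "((\<lambda>u. integral {0..u} f) has_vector_derivative f v) (at v within {0..v+1})"
  proof (rule integral_has_vector_derivative)
    show "continuous_on {0..v+1} f" by (rule continuous_on_subset[OF assms(1)]) auto
  qed (use assms in auto)
  moreover have "v \<in> interior {0..v+1}" using assms by simp
  ultimately show ?thesis using at_within_interior by metis
qed

lemma int_cont:
  fixes f :: "real \<Rightarrow> 'a::banach"
  assumes "continuous_on {0..} f"
  shows "continuous_on {0..u} (\<lambda>u. integral {0..u} f)"
proof (rule indefinite_integral_continuous_1, rule integrable_continuous_real)
  show "continuous_on {0..u} f" by (rule continuous_on_subset[OF assms]) auto
qed

lemma decr: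
  fixes H H' :: "real \<Rightarrow> real"
  assumes "0 \<le> u" "continuous_on {0..u} H"
    "\<And>v. 0 < v \<Longrightarrow> v < u \<Longrightarrow> (H has_real_derivative H' v) (at v)" "\<And>v. 0 < v \<Longrightarrow> v < u \<Longrightarrow> H' v \<le> 0"
  shows "H u \<le> H 0"
  using DERIV_nonpos_imp_decreasing_open[of 0 u H] assms by blast

lemma core:
  fixes r0 \<kappa> L1 L2 lam1 lam2 \<rho> q K \<beta> c t :: real
    and Z :: "real^'n \<Rightarrow> real^'n"
    and b :: "(real \<Rightarrow> real^'n) \<Rightarrow> real^'n"
    and \<sigma> :: "real^'n^'n"
    and w \<xi> \<eta> X Y :: "real \<Rightarrow> real^'n"
  assumes r0: "r0 > 0"
    and kappa: "0 < \<kappa>" "\<kappa> < 1"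
    and L1: "L1 > 0" "\<And>x y. norm (Z x - Z y) \<le> L1 * norm (x - y)"
    and L2: "L2 > 0"
      "\<And>\<xi> \<eta>. continuous_on {-r0..0} \<xi> \<Longrightarrow> continuous_on {-r0..0} \<eta> \<Longrightarrow>
          norm (b \<xi> - b \<eta>) \<le> L2 * supnorm r0 (\<lambda>\<theta>. \<xi> \<theta> - \<eta> \<theta>)"
    and lam: "lam1 > 0" "lam2 > 0"
    and mono: "\<And>\<xi> \<eta>. continuous_on {-r0..0} \<xi> \<Longrightarrow> continuous_on {-r0..0} \<eta> \<Longrightarrow>
        2 * inner (Z (\<xi> 0) - Z (\<eta> 0) + b \<xi> - b \<eta>)
                  (\<xi> 0 - \<eta> 0 + Lop r0 \<kappa> (\<lambda>\<theta>. \<xi> \<theta> - \<eta> \<theta>))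
        \<le> lam2 * (supnorm r0 (\<lambda>\<theta>. \<xi> \<theta> - \<eta> \<theta>))\<^sup>2 - lam1 * (norm (\<xi> 0 - \<eta> 0))\<^sup>2"
    and rho: "\<rho> = lam1 / (1 + \<kappa>)"
    and qdef: "q = \<kappa> * r0\<^sup>2 * exp (\<rho> * r0)" and q1: "q < 1"
    and Kdef: "K = \<kappa> * r0\<^sup>2 * lam1 + lam2"
    and bdef: "\<beta> = K * exp (\<rho> * r0) / ((1 - \<kappa>) * (1 - q))"
    and cdef: "c = exp (\<rho> * r0) * (1 + (1 + \<kappa> * r0)\<^sup>2 / (1 - \<kappa>)) / (1 - q)"
    and xi: "continuous_on {-r0..0} \<xi>" "continuous_on {-r0..0} \<eta>"
    and solX: "is_solution r0 \<kappa> Z b \<sigma> w \<xi> X" and solY: "is_solution r0 \<kappa> Z b \<sigma> w \<eta> Y"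
    and t: "t \<ge> 0"
  shows "(supnorm r0 (\<lambda>\<theta>. seg X t \<theta> - seg Y t \<theta>))\<^sup>2
     \<le> c * exp (- (\<rho> - \<beta>) * t) * (supnorm r0 (\<lambda>\<theta>. \<xi> \<theta> - \<eta> \<theta>))\<^sup>2"
proof -
  have r0': "r0 \<ge> 0" using r0 by simp
  have rho0: "\<rho> > 0" using rho lam kappa by simp
  have q0: "q > 0" using qdef kappa r0 by simp
  have K0: "K > 0" using Kdef kappa lam by (simp add: add_nonneg_pos)
  have beta0: "\<beta> > 0" using bdef K0 kappa q1 by simp
  from solX have cX: "continuous_on {-r0..} X" and X0: "\<And>\<theta>. \<theta>\<in>{-r0..0} \<Longrightarrow> X \<theta> = \<xi> \<theta>"
    and eqX: "\<And>s. s \<ge> 0 \<Longrightarrow> (\<lambda>s. Z (X s) + b (seg X s)) integrable_on {0..s} \<and>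
        X s + Lop r0 \<kappa> (seg X s) = \<xi> 0 + Lop r0 \<kappa> \<xi> + integral {0..s} (\<lambda>s. Z (X s) + b (seg X s)) + \<sigma> *v (w s - w 0)"
    unfolding is_solution_def by auto
  from solY have cY: "continuous_on {-r0..} Y" and Y0: "\<And>\<theta>. \<theta>\<in>{-r0..0} \<Longrightarrow> Y \<theta> = \<eta> \<theta>"
    and eqY: "\<And>s. s \<ge> 0 \<Longrightarrow> (\<lambda>s. Z (Y s) + b (seg Y s)) integrable_on {0..s} \<and>
        Y s + Lop r0 \<kappa> (seg Y s) = \<eta> 0 + Lop r0 \<kappa> \<eta> + integral {0..s} (\<lambda>s. Z (Y s) + b (seg Y s)) + \<sigma> *v (w s - w 0)"
    unfolding is_solution_def by auto
  define D where "D u = X u - Y u" for u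
  define S where "S s = supnorm r0 (\<lambda>\<theta>. D (s + \<theta>))" for s
  define g where "g s = Z (X s) + b (seg X s) - (Z (Y s) + b (seg Y s))" for s
  define M0 where "M0 = \<xi> 0 - \<eta> 0 + Lop r0 \<kappa> (\<lambda>\<theta>. \<xi> \<theta> - \<eta> \<theta>)"
  define Mi where "Mi v = M0 + integral {0..v} g" for v
  define A where "A = (supnorm r0 (\<lambda>\<theta>. \<xi> \<theta> - \<eta> \<theta>))\<^sup>2"
  define \<phi> where "\<phi> s = exp (\<rho> * s) * (S s)\<^sup>2" for s
  define F where "F v = integral {0..v} \<phi>" for v
  have cD: "continuous_on {-r0..} D" unfolding D_def using cX cY by (intro continuous_intros)
  have cDs: "continuous_on {-r0..0} (\<lambda>\<theta>. D (s + \<theta>))" if "s \<ge> 0" for s using seg_cont[OF cD that] .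
  have cXs: "continuous_on {-r0..0} (seg X s)" if "s \<ge> 0" for s using seg_cont[OF cX that] by (simp add: seg_def)
  have cYs: "continuous_on {-r0..0} (seg Y s)" if "s \<ge> 0" for s using seg_cont[OF cY that] by (simp add: seg_def)
  have hM: "D s + Lop r0 \<kappa> (\<lambda>\<theta>. D (s + \<theta>)) = Mi s" if s: "s \<ge> 0" for s
  proof -
    have 1: "Lop r0 \<kappa> (\<lambda>\<theta>. D (s + \<theta>)) = Lop r0 \<kappa> (seg X s) - Lop r0 \<kappa> (seg Y s)"
      using Lop_diff[OF cXs[OF s] cYs[OF s]] by (simp add: D_def seg_def)
    have 2: "Lop r0 \<kappa> (\<lambda>\<theta>. \<xi> \<theta> - \<eta> \<theta>) = Lop r0 \<kappa> \<xi> - Lop r0 \<kappa> \<eta>" using Lop_diff[OF xi] by simp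
    have 3: "integral {0..s} g = integral {0..s} (\<lambda>s. Z (X s) + b (seg X s)) - integral {0..s} (\<lambda>s. Z (Y s) + b (seg Y s))"
      unfolding g_def using eqX[OF s] eqY[OF s] by (simp add: integral_diff)
    have 4: "(X s + Lop r0 \<kappa> (seg X s)) - (Y s + Lop r0 \<kappa> (seg Y s)) =
       (\<xi> 0 + Lop r0 \<kappa> \<xi> + integral {0..s} (\<lambda>s. Z (X s) + b (seg X s)) + \<sigma> *v (w s - w 0))
       - (\<eta> 0 + Lop r0 \<kappa> \<eta> + integral {0..s} (\<lambda>s. Z (Y s) + b (seg Y s)) + \<sigma> *v (w s - w 0))"
      using eqX[OF s] eqY[OF s] by simp
    show ?thesis unfolding Mi_def M0_def 1 2 3 unfolding D_def using 4 by (simp add: algebra_simps)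
  qed
  have cZ: "continuous_on UNIV Z" by (rule cont_Z[OF L1])
  have cg: "continuous_on {0..} g" unfolding g_def
  proof (intro continuous_intros cont_b[OF cX r0' L2] cont_b[OF cY r0' L2])
    show "continuous_on {0..} (\<lambda>s. Z (X s))"
      by (rule continuous_on_compose2[OF cZ continuous_on_subset[OF cX]]) (use r0 in auto)
    show "continuous_on {0..} (\<lambda>s. Z (Y s))"
      by (rule continuous_on_compose2[OF cZ continuous_on_subset[OF cY]]) (use r0 in auto)
  qed
  have cS: "continuous_on {0..} S" unfolding S_def by (rule cont_S[OF cD r0'])
  have cphi: "continuous_on {0..} \<phi>" unfolding \<phi>_def by (intro continuous_intros cS)
  have S0: "S s \<ge> 0" if "s \<ge> 0" for s unfolding S_def by (rule supnorm_nonneg[OF cDs[OF that] r0'])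
  have phi0: "\<phi> s \<ge> 0" for s unfolding \<phi>_def by simp
  have Lb: "norm (Lop r0 \<kappa> (\<lambda>\<theta>. D (s + \<theta>))) \<le> \<kappa> * r0 * S s" if "s \<ge> 0" for s
    unfolding S_def using Lop_bound[OF cDs[OF that] r0'] kappa by simp
  have P1: "\<rho> * (norm (Mi s))\<^sup>2 + 2 * inner (g s) (Mi s) \<le> K * (S s)\<^sup>2" if s: "s \<ge> 0" for s
  proof -
    have e1: "Z (seg X s 0) - Z (seg Y s 0) + b (seg X s) - b (seg Y s) = g s"
      by (simp add: g_def seg_def algebra_simps)
    have e2: "(\<lambda>\<theta>. seg X s \<theta> - seg Y s \<theta>) = (\<lambda>\<theta>. D (s + \<theta>))" by (simp add: seg_def D_def)
    have e3: "seg X s 0 - seg Y s 0 = D s" by (simp add: seg_def D_def)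
    have m: "2 * inner (g s) (Mi s) \<le> lam2 * (S s)\<^sup>2 - lam1 * (norm (D s))\<^sup>2"
      using mono[OF cXs[OF s] cYs[OF s]] unfolding e1 e2 e3 hM[OF s] S_def .
    define a where "a = norm (D s)"
    define l where "l = norm (Lop r0 \<kappa> (\<lambda>\<theta>. D (s + \<theta>)))"
    have nM: "norm (Mi s) \<le> a + l" unfolding a_def l_def hM[OF s, symmetric] by (rule norm_triangle_ineq)
    have l0: "0 \<le> l" "l \<le> \<kappa> * r0 * S s" using Lb[OF s] by (auto simp: l_def)
    have a0: "0 \<le> a" by (simp add: a_def)
    have y: "\<kappa> * (a + l)\<^sup>2 \<le> \<kappa> * (1 + \<kappa>) * a\<^sup>2 + (1 + \<kappa>) * l\<^sup>2"
    proof -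
      have "0 \<le> (\<kappa> * a - l)\<^sup>2" by simp
      then show ?thesis by (simp add: power2_eq_square algebra_simps)
    qed
    have "(norm (Mi s))\<^sup>2 \<le> (a + l)\<^sup>2" using nM by (simp add: power_mono)
    then have "\<kappa> * (norm (Mi s))\<^sup>2 \<le> \<kappa> * (1 + \<kappa>) * a\<^sup>2 + (1 + \<kappa>) * l\<^sup>2"
      using y kappa by (smt (verit) mult_left_mono)
    then have "\<rho> * (\<kappa> * (norm (Mi s))\<^sup>2) \<le> \<rho> * (\<kappa> * (1 + \<kappa>) * a\<^sup>2 + (1 + \<kappa>) * l\<^sup>2)"
      using rho0 by (simp add: mult_left_mono)
    also have "\<dots> = \<kappa> * lam1 * a\<^sup>2 + lam1 * l\<^sup>2"
    proof -
      have lr: "lam1 = \<rho> * (1 + \<kappa>)" using rho kappa by (simp add: field_simps)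
      show ?thesis unfolding lr by (simp add: algebra_simps)
    qed
    also have "\<dots> \<le> \<kappa> * lam1 * a\<^sup>2 + lam1 * (\<kappa> * r0 * S s)\<^sup>2"
      using l0 lam by (simp add: power_mono)
    finally have "\<kappa> * (\<rho> * (norm (Mi s))\<^sup>2) \<le> \<kappa> * (lam1 * a\<^sup>2 + lam1 * \<kappa> * r0\<^sup>2 * (S s)\<^sup>2)"
      by (simp add: algebra_simps power_mult_distrib power2_eq_square)
    then have "\<rho> * (norm (Mi s))\<^sup>2 \<le> lam1 * a\<^sup>2 + lam1 * \<kappa> * r0\<^sup>2 * (S s)\<^sup>2"
      using kappa by simp
    with m show ?thesis unfolding Kdef a_def by (simp add: algebra_simps)
  qed
  have P2: "(norm (D u))\<^sup>2 \<le> (norm (Mi u))\<^sup>2 / (1 - \<kappa>) + \<kappa> * r0\<^sup>2 * (S u)\<^sup>2" if u: "u \<ge> 0" for u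
  proof -
    define m where "m = norm (Mi u)"
    define l where "l = norm (Lop r0 \<kappa> (\<lambda>\<theta>. D (u + \<theta>)))"
    have "D u = Mi u - Lop r0 \<kappa> (\<lambda>\<theta>. D (u + \<theta>))" using hM[OF u] by (simp add: algebra_simps)
    then have nD: "norm (D u) \<le> m + l" unfolding m_def l_def by (metis norm_triangle_ineq4)
    have l0: "0 \<le> l" "l \<le> \<kappa> * r0 * S u" using Lb[OF u] by (auto simp: l_def)
    have m0: "0 \<le> m" by (simp add: m_def)
    have y: "\<kappa> * (1 - \<kappa>) * (m + l)\<^sup>2 \<le> \<kappa> * m\<^sup>2 + (1 - \<kappa>) * l\<^sup>2"
    proof -
      have "0 \<le> (\<kappa> * m - (1 - \<kappa>) * l)\<^sup>2" by simp
      then show ?thesis by (simp add: power2_eq_square algebra_simps)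
    qed
    have k: "\<kappa> * (1 - \<kappa>) > 0" using kappa by simp
    have "(norm (D u))\<^sup>2 \<le> (m + l)\<^sup>2" using nD by (simp add: power_mono)
    also have "\<dots> \<le> (\<kappa> * m\<^sup>2 + (1 - \<kappa>) * l\<^sup>2) / (\<kappa> * (1 - \<kappa>))"
      using y k by (simp add: field_simps)
    also have "\<dots> = m\<^sup>2 / (1 - \<kappa>) + l\<^sup>2 / \<kappa>" using kappa by (simp add: field_simps)
    also have "l\<^sup>2 / \<kappa> \<le> (\<kappa> * r0 * S u)\<^sup>2 / \<kappa>"
      using l0 kappa by (simp add: power_mono divide_right_mono)
    also have "(\<kappa> * r0 * S u)\<^sup>2 / \<kappa> = \<kappa> * r0\<^sup>2 * (S u)\<^sup>2" using kappa by (simp add: power2_eq_square)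
    finally show ?thesis unfolding m_def by simp
  qed
  have Mi0: "Mi 0 = M0" by (simp add: Mi_def)
  have F0: "F 0 = 0" by (simp add: F_def)
  have cMi: "continuous_on {0..u} Mi" for u
    unfolding Mi_def by (intro continuous_intros int_cont[OF cg])
  have cF: "continuous_on {0..u} F" for u unfolding F_def by (rule int_cont[OF cphi])
  have dMi: "(Mi has_vector_derivative g v) (at v)" if "v > 0" for v
  proof -
    have "((\<lambda>v. M0 + integral {0..v} g) has_vector_derivative (0 + g v)) (at v)"
      by (intro has_vector_derivative_add has_vector_derivative_const int_deriv[OF cg that])
    then show ?thesis by (simp add: Mi_def[abs_def])
  qed
  have dF: "(F has_real_derivative \<phi> v) (at v)" if "v > 0" for v
    using int_deriv[OF cphi that] unfolding F_def[abs_def] by (simp add: has_real_derivative_iff_has_vector_derivative)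
  have P5: "exp (\<rho> * u) * (norm (Mi u))\<^sup>2 \<le> (norm M0)\<^sup>2 + K * F u" if u: "u \<ge> 0" for u
  proof -
    define H where "H v = exp (\<rho> * v) * (norm (Mi v))\<^sup>2 - K * F v" for v
    have "H u \<le> H 0"
    proof (rule DERIV_nonpos_imp_decreasing_open[OF u])
      show "continuous_on {0..u} H" unfolding H_def
        by (intro continuous_intros cF cMi)
    next
      fix v :: real assume v: "0 < v" "v < u"
      have d1: "((\<lambda>x. (norm (Mi x))\<^sup>2) has_real_derivative 2 * inner (g v) (Mi v)) (at v)"
        by (rule norm2_deriv[OF dMi[OF v(1)]])
      have d3: "((\<lambda>x. exp (\<rho> * x)) has_real_derivative exp (\<rho> * v) * \<rho>) (at v)"
        by (auto intro!: derivative_eq_intros)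
      have dH: "(H has_real_derivative exp (\<rho> * v) * (\<rho> * (norm (Mi v))\<^sup>2 + 2 * inner (g v) (Mi v)) - K * \<phi> v) (at v)"
        unfolding H_def
        by (rule DERIV_cong[OF DERIV_diff[OF DERIV_mult[OF d3 d1] DERIV_cmult[OF dF[OF v(1)]]]])
           (simp add: algebra_simps)
      have "exp (\<rho> * v) * (\<rho> * (norm (Mi v))\<^sup>2 + 2 * inner (g v) (Mi v)) \<le> exp (\<rho> * v) * (K * (S v)\<^sup>2)"
        using P1[of v] v by (intro mult_left_mono) auto
      then have "exp (\<rho> * v) * (\<rho> * (norm (Mi v))\<^sup>2 + 2 * inner (g v) (Mi v)) - K * \<phi> v \<le> 0"
        unfolding \<phi>_def by (simp add: algebra_simps)
      with dH show "\<exists>y. DERIV H v :> y \<and> y \<le> 0" by blast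
    qed
    then show ?thesis unfolding H_def Mi0 F0 by simp
  qed
  define a' where "a' = exp (\<rho> * r0) * (A + (norm M0)\<^sup>2 / (1 - \<kappa>)) / (1 - q)"
  have A0: "A \<ge> 0" by (simp add: A_def)
  have F0': "F v \<ge> 0" if "v \<ge> 0" for v unfolding F_def
    using that by (intro integral_nonneg integrable_continuous_real continuous_on_subset[OF cphi]) (auto simp: phi0)
  have Fmono: "F u \<le> F t'" if "0 \<le> u" "u \<le> t'" for u t'
    unfolding F_def using that
    by (intro integral_subset_le integrable_continuous_real continuous_on_subset[OF cphi]) (auto simp: phi0)
  have hDxi: "D u = \<xi> u - \<eta> u" if "u \<in> {-r0..0}" for u using X0[OF that] Y0[OF that] by (simp add: D_def)
  have hD0: "(norm (D u))\<^sup>2 \<le> A" if "u \<in> {-r0..0}" for u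
  proof -
    have c: "continuous_on {-r0..0} (\<lambda>\<theta>. \<xi> \<theta> - \<eta> \<theta>)" by (intro continuous_intros xi)
    have "norm (D u) \<le> supnorm r0 (\<lambda>\<theta>. \<xi> \<theta> - \<eta> \<theta>)"
      using supnorm_ge[OF c that] hDxi[OF that] by simp
    then show ?thesis unfolding A_def by (simp add: power_mono)
  qed
  have kk: "1 - \<kappa> > 0" using kappa by simp
  have qq: "1 - q > 0" using q1 by simp
  have P6: "\<phi> t' \<le> a' + \<beta> * F t'" if t': "t' \<ge> 0" for t'
  proof -
    define h where "h u = exp (\<rho> * u) * (norm (D u))\<^sup>2" for u
    have ch: "continuous_on {-r0..t'} h" unfolding h_def
      by (intro continuous_intros continuous_on_subset[OF cD]) auto
    have bdd: "bdd_above (h ` {-r0..t'})"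
      by (intro bounded_imp_bdd_above compact_imp_bounded compact_continuous_image ch) auto
    define G where "G = (SUP u\<in>{-r0..t'}. h u)"
    have hG: "h u \<le> G" if "u \<in> {-r0..t'}" for u unfolding G_def by (rule cSUP_upper[OF that bdd])
    have G0: "G \<ge> 0" using hG[of t'] t' r0 by (smt (verit) atLeastAtMost_iff exp_gt_zero h_def mult_nonneg_nonneg zero_le_power2)
    have hphi: "\<phi> s \<le> exp (\<rho> * r0) * G" if s: "s \<in> {0..t'}" for s
    proof -
      have "(S s)\<^sup>2 \<le> exp (\<rho> * r0) * G * exp (- (\<rho> * s))"
        unfolding S_def
      proof (rule supnorm_le2[OF r0'])
        fix \<theta> assume th: "\<theta> \<in> {-r0..0}"
        have "h (s + \<theta>) \<le> G" using hG[of "s + \<theta>"] th s by auto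
        then have "(norm (D (s + \<theta>)))\<^sup>2 \<le> G / exp (\<rho> * (s + \<theta>))"
          unfolding h_def by (simp add: pos_le_divide_eq mult.commute)
        also have "\<dots> = G * exp (- (\<rho> * s)) * exp (- (\<rho> * \<theta>))"
          by (simp add: exp_minus field_simps exp_add distrib_left)
        also have "\<dots> \<le> G * exp (- (\<rho> * s)) * exp (\<rho> * r0)"
        proof -
          have "- (\<rho> * \<theta>) \<le> \<rho> * r0" using mult_left_mono[of "-\<theta>" r0 \<rho>] th rho0 by auto
          then show ?thesis using G0 by (intro mult_left_mono) auto
        qed
        finally show "(norm (D (s + \<theta>)))\<^sup>2 \<le> exp (\<rho> * r0) * G * exp (- (\<rho> * s))"
          by (simp add: algebra_simps)
      qed
      then have "exp (\<rho> * s) * (S s)\<^sup>2 \<le> exp (\<rho> * s) * (exp (\<rho> * r0) * G * exp (- (\<rho> * s)))"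
        by (simp add: mult_left_mono)
      also have "\<dots> = exp (\<rho> * r0) * G" by (simp add: exp_minus field_simps)
      finally show ?thesis by (simp add: \<phi>_def)
    qed
    have hR: "h u \<le> A + ((norm M0)\<^sup>2 + K * F t') / (1 - \<kappa>) + q * G" if u: "u \<in> {-r0..t'}" for u
    proof (cases "u \<le> 0")
      case True
      have "h u \<le> (norm (D u))\<^sup>2" unfolding h_def using True rho0
        by (intro mult_left_le_one_le) (auto simp: mult_nonneg_nonpos)
      also have "\<dots> \<le> A" using hD0[of u] u True by auto
      moreover have "((norm M0)\<^sup>2 + K * F t') / (1 - \<kappa>) \<ge> 0"
        using F0'[OF t'] K0 kk by (intro divide_nonneg_pos add_nonneg_nonneg) auto
      moreover have "q * G \<ge> 0" using q0 G0 by simp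
      ultimately show ?thesis by linarith
    next
      case False
      then have u0: "u \<ge> 0" by simp
      have "h u \<le> exp (\<rho> * u) * ((norm (Mi u))\<^sup>2 / (1 - \<kappa>) + \<kappa> * r0\<^sup>2 * (S u)\<^sup>2)"
        unfolding h_def using P2[OF u0] by (simp add: mult_left_mono)
      also have "\<dots> = (exp (\<rho> * u) * (norm (Mi u))\<^sup>2) / (1 - \<kappa>) + \<kappa> * r0\<^sup>2 * \<phi> u"
        by (simp add: \<phi>_def algebra_simps)
      also have "\<dots> \<le> ((norm M0)\<^sup>2 + K * F t') / (1 - \<kappa>) + \<kappa> * r0\<^sup>2 * (exp (\<rho> * r0) * G)"
      proof (intro add_mono divide_right_mono mult_left_mono)
        show "exp (\<rho> * u) * (norm (Mi u))\<^sup>2 \<le> (norm M0)\<^sup>2 + K * F t'"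
          using P5[OF u0] Fmono[OF u0, of t'] u K0 by (smt (verit) atLeastAtMost_iff mult_left_mono)
        show "\<phi> u \<le> exp (\<rho> * r0) * G" using hphi[of u] u u0 by auto
      qed (use kk kappa in auto)
      also have "\<dots> = ((norm M0)\<^sup>2 + K * F t') / (1 - \<kappa>) + q * G" by (simp add: qdef)
      finally show ?thesis using A0 by linarith
    qed
    have "(SUP u\<in>{-r0..t'}. h u) \<le> A + ((norm M0)\<^sup>2 + K * F t') / (1 - \<kappa>) + q * G"
      by (rule cSUP_least) (use hR r0 t' in auto)
    then have "G \<le> A + ((norm M0)\<^sup>2 + K * F t') / (1 - \<kappa>) + q * G" by (simp add: G_def[symmetric])
    then have "G * (1 - q) \<le> A + ((norm M0)\<^sup>2 + K * F t') / (1 - \<kappa>)" by (simp add: algebra_simps)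
    then have "G \<le> (A + ((norm M0)\<^sup>2 + K * F t') / (1 - \<kappa>)) / (1 - q)" using qq by (simp add: pos_le_divide_eq)
    then have "\<phi> t' \<le> exp (\<rho> * r0) * ((A + ((norm M0)\<^sup>2 + K * F t') / (1 - \<kappa>)) / (1 - q))"
      using hphi[of t'] t' by (smt (verit) atLeastAtMost_iff exp_gt_zero mult_left_mono order_refl)
    also have "\<dots> = a' + \<beta> * F t'"
    proof -
      have 1: "(A + ((norm M0)\<^sup>2 + K * F t') / (1 - \<kappa>)) = (A + (norm M0)\<^sup>2 / (1 - \<kappa>)) + K * F t' / (1 - \<kappa>)"
        by (simp add: add_divide_distrib)
      show ?thesis unfolding a'_def bdef 1 by (simp add: add_divide_distrib distrib_left)
    qed
    finally show ?thesis .
  qed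
  have P7: "F t' + a' / \<beta> \<le> a' / \<beta> * exp (\<beta> * t')" if t': "t' \<ge> 0" for t'
  proof -
    define G2 where "G2 v = (F v + a' / \<beta>) * exp (- (\<beta> * v))" for v
    have "G2 t' \<le> G2 0"
    proof (rule DERIV_nonpos_imp_decreasing_open[OF t'])
      show "continuous_on {0..t'} G2" unfolding G2_def by (intro continuous_intros cF)
    next
      fix v :: real assume v: "0 < v" "v < t'"
      have d3: "((\<lambda>x. exp (- (\<beta> * x))) has_real_derivative exp (- (\<beta> * v)) * (- \<beta>)) (at v)"
        by (auto intro!: derivative_eq_intros)
      have d4: "((\<lambda>x. F x + a' / \<beta>) has_real_derivative \<phi> v + 0) (at v)"
        by (intro DERIV_add dF[OF v(1)] DERIV_const)
      have dG: "(G2 has_real_derivative exp (- (\<beta> * v)) * (\<phi> v - \<beta> * F v - a')) (at v)"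
        unfolding G2_def
        by (rule DERIV_cong[OF DERIV_mult[OF d4 d3]]) (use beta0 in \<open>simp add: field_simps\<close>)
      have "\<phi> v - \<beta> * F v - a' \<le> 0" using P6[of v] v by simp
      then have "exp (- (\<beta> * v)) * (\<phi> v - \<beta> * F v - a') \<le> 0" by (simp add: mult_nonneg_nonpos)
      with dG show "\<exists>y. DERIV G2 v :> y \<and> y \<le> 0" by blast
    qed
    then have "(F t' + a' / \<beta>) * exp (- (\<beta> * t')) \<le> a' / \<beta>" unfolding G2_def F0 by simp
    then have "(F t' + a' / \<beta>) * exp (- (\<beta> * t')) * exp (\<beta> * t') \<le> a' / \<beta> * exp (\<beta> * t')"
      by (rule mult_right_mono) simp
    moreover have "(F t' + a' / \<beta>) * exp (- (\<beta> * t')) * exp (\<beta> * t') = F t' + a' / \<beta>"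
      by (simp add: mult.assoc flip: exp_add)
    ultimately show ?thesis by simp
  qed
  have phit: "\<phi> t \<le> a' * exp (\<beta> * t)"
  proof -
    have "\<phi> t \<le> a' + \<beta> * F t" by (rule P6[OF t])
    also have "\<dots> \<le> a' + \<beta> * (a' / \<beta> * exp (\<beta> * t) - a' / \<beta>)"
      using P7[OF t] beta0 by (simp add: mult_left_mono)
    also have "\<dots> = a' * exp (\<beta> * t)" using beta0 by (simp add: field_simps)
    finally show ?thesis .
  qed
  have M0b: "(norm M0)\<^sup>2 \<le> (1 + \<kappa> * r0)\<^sup>2 * A"
  proof -
    have c: "continuous_on {-r0..0} (\<lambda>\<theta>. \<xi> \<theta> - \<eta> \<theta>)" by (intro continuous_intros xi)
    define s0 where "s0 = supnorm r0 (\<lambda>\<theta>. \<xi> \<theta> - \<eta> \<theta>)"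
    have "norm M0 \<le> norm (\<xi> 0 - \<eta> 0) + norm (Lop r0 \<kappa> (\<lambda>\<theta>. \<xi> \<theta> - \<eta> \<theta>))"
      unfolding M0_def by (rule norm_triangle_ineq)
    also have "\<dots> \<le> s0 + \<kappa> * r0 * s0"
      using supnorm_ge[OF c, of 0] Lop_bound[OF c r0'] kappa r0 unfolding s0_def by (intro add_mono) auto
    finally have "norm M0 \<le> (1 + \<kappa> * r0) * s0" by (simp add: algebra_simps)
    then have "(norm M0)\<^sup>2 \<le> ((1 + \<kappa> * r0) * s0)\<^sup>2" by (simp add: power_mono)
    then show ?thesis unfolding A_def s0_def by (simp add: power_mult_distrib)
  qed
  have a'c: "a' \<le> c * A"
  proof -
    have "(norm M0)\<^sup>2 / (1 - \<kappa>) \<le> (1 + \<kappa> * r0)\<^sup>2 * A / (1 - \<kappa>)"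
      using M0b kk by (simp add: divide_right_mono)
    then have "A + (norm M0)\<^sup>2 / (1 - \<kappa>) \<le> (1 + (1 + \<kappa> * r0)\<^sup>2 / (1 - \<kappa>)) * A"
      by (simp add: algebra_simps)
    then have "exp (\<rho> * r0) * (A + (norm M0)\<^sup>2 / (1 - \<kappa>)) / (1 - q)
        \<le> exp (\<rho> * r0) * ((1 + (1 + \<kappa> * r0)\<^sup>2 / (1 - \<kappa>)) * A) / (1 - q)"
      using qq by (intro divide_right_mono mult_left_mono) auto
    then show ?thesis unfolding a'_def cdef by (simp add: algebra_simps)
  qed
  have lhs: "supnorm r0 (\<lambda>\<theta>. seg X t \<theta> - seg Y t \<theta>) = S t" by (simp add: S_def seg_def D_def)
  have "(S t)\<^sup>2 = \<phi> t * exp (- (\<rho> * t))" by (simp add: \<phi>_def exp_minus)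
  also have "\<dots> \<le> a' * exp (\<beta> * t) * exp (- (\<rho> * t))" using phit by (simp add: mult_right_mono)
  also have "\<dots> = a' * exp (- (\<rho> - \<beta>) * t)" by (simp add: mult_exp_exp algebra_simps)
  also have "\<dots> \<le> c * A * exp (- (\<rho> - \<beta>) * t)" using a'c by (simp add: mult_right_mono)
  finally show ?thesis unfolding lhs A_def by (simp add: algebra_simps)
qed

theorem lemma2p5:
  fixes r0 \<kappa> L1 L2 lam1 lam2 :: real
    and Z :: "real^'n \<Rightarrow> real^'n"
    and b :: "(real \<Rightarrow> real^'n) \<Rightarrow> real^'n"
    and \<sigma> :: "real^'n^'n"
  assumes r0: "r0 > 0"
    and kappa: "0 < \<kappa>" "\<kappa> < 1"
    and sigma: "invertible \<sigma>"
    and L1: "L1 > 0" "\<And>x y. norm (Z x - Z y) \<le> L1 * norm (x - y)"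
    and L2: "L2 > 0"
      "\<And>\<xi> \<eta>. continuous_on {-r0..0} \<xi> \<Longrightarrow> continuous_on {-r0..0} \<eta> \<Longrightarrow>
          norm (b \<xi> - b \<eta>) \<le> L2 * supnorm r0 (\<lambda>\<theta>. \<xi> \<theta> - \<eta> \<theta>)"
    and lam: "lam1 > lam2" "lam2 > 0"
    and mono: "\<And>\<xi> \<eta>. continuous_on {-r0..0} \<xi> \<Longrightarrow> continuous_on {-r0..0} \<eta> \<Longrightarrow>
        2 * inner (Z (\<xi> 0) - Z (\<eta> 0) + b \<xi> - b \<eta>)
                  (\<xi> 0 - \<eta> 0 + Lop r0 \<kappa> (\<lambda>\<theta>. \<xi> \<theta> - \<eta> \<theta>))
        \<le> lam2 * (supnorm r0 (\<lambda>\<theta>. \<xi> \<theta> - \<eta> \<theta>))\<^sup>2 - lam1 * (norm (\<xi> 0 - \<eta> 0))\<^sup>2"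
    and cond1: "1 - \<kappa> * r0\<^sup>2 * exp (lam1 / (1 + \<kappa>) * r0) > 0"
    and cond2: "lam1 / (1 + \<kappa>)
        - (\<kappa> * r0\<^sup>2 * lam1 + lam2) * exp (lam1 / (1 + \<kappa>) * r0)
          / ((1 - \<kappa>) * (1 - \<kappa> * r0\<^sup>2 * exp (lam1 / (1 + \<kappa>) * r0))) > 0"
  shows "\<exists>c>0. \<forall>w \<xi> \<eta> X Y t.
      continuous_on {0..} w \<longrightarrow>
      continuous_on {-r0..0} \<xi> \<longrightarrow> continuous_on {-r0..0} \<eta> \<longrightarrow>
      is_solution r0 \<kappa> Z b \<sigma> w \<xi> X \<longrightarrow> is_solution r0 \<kappa> Z b \<sigma> w \<eta> Y \<longrightarrow>
      t \<ge> 0 \<longrightarrow>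
      (supnorm r0 (\<lambda>\<theta>. seg X t \<theta> - seg Y t \<theta>))\<^sup>2
        \<le> c * exp (- (lam1 / (1 + \<kappa>)
              - (\<kappa> * r0\<^sup>2 * lam1 + lam2) * exp (lam1 / (1 + \<kappa>) * r0)
                / ((1 - \<kappa>) * (1 - \<kappa> * r0\<^sup>2 * exp (lam1 / (1 + \<kappa>) * r0)))) * t)
          * (supnorm r0 (\<lambda>\<theta>. \<xi> \<theta> - \<eta> \<theta>))\<^sup>2"
proof -
  define c :: real where "c = exp (lam1 / (1 + \<kappa>) * r0) * (1 + (1 + \<kappa> * r0)\<^sup>2 / (1 - \<kappa>)) / (1 - \<kappa> * r0\<^sup>2 * exp (lam1 / (1 + \<kappa>) * r0))"
  have q1: "\<kappa> * r0\<^sup>2 * exp (lam1 / (1 + \<kappa>) * r0) < 1" using cond1 by simp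
  have l1: "lam1 > 0" using lam by simp
  have c0: "c > 0" unfolding c_def using cond1 kappa
    by (intro divide_pos_pos mult_pos_pos add_pos_nonneg) auto
  show ?thesis
  proof (intro exI[of _ c] conjI allI impI)
    show "c > 0" by (rule c0)
    fix w \<xi> \<eta> X Y and t :: real
    assume xi: "continuous_on {-r0..0} \<xi>" "continuous_on {-r0..0} \<eta>"
      and sol: "is_solution r0 \<kappa> Z b \<sigma> w \<xi> X" "is_solution r0 \<kappa> Z b \<sigma> w \<eta> Y" and t: "t \<ge> 0"
    show "(supnorm r0 (\<lambda>\<theta>. seg X t \<theta> - seg Y t \<theta>))\<^sup>2
        \<le> c * exp (- (lam1 / (1 + \<kappa>)
              - (\<kappa> * r0\<^sup>2 * lam1 + lam2) * exp (lam1 / (1 + \<kappa>) * r0)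
                / ((1 - \<kappa>) * (1 - \<kappa> * r0\<^sup>2 * exp (lam1 / (1 + \<kappa>) * r0)))) * t)
          * (supnorm r0 (\<lambda>\<theta>. \<xi> \<theta> - \<eta> \<theta>))\<^sup>2"
      by (rule core[OF r0 kappa L1 L2 l1 lam(2) mono refl refl q1 refl refl c_def xi sol t])
  qed
qed

end
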